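(* In the setting of the incomplete arithmetic HRE matrix $A_k$ (with $1\le k<n$), if $k=1$, or if $s_{\mathrm{MAX}}=s_{\mathrm{MIN}}$ and $\overline{\mathit{CI}}(C_k)<\frac{n-k}{k-1}$, then $A_k$ is invertible.
   Context: $C_k=[c_{ij}]_{i,j=1}^k$ is the upper-left $k\times k$ submatrix of an incomplete $n\times n$ pairwise comparison matrix (entries positive or unknown $?$, known entries reciprocal with unit diagonal). $s_i$ is the number of missing entries in row $i$ of $C_k$, $s_{\mathrm{MAX}}=\max_i s_i$, $s_{\mathrm{MIN}}=\min_i s_i$. $D_k=[d_{ij}]$ with $d_{ij}=c_{ij}$ if known, $0$ if $c_{ij}=?$. $A_k$ has diagonal entries $1$ and off-diagonal entries $-\frac{d_{ij}}{n-s_i-1}$. Harker's index: $\overline{\mathit{CI}}(C_k)=\frac{\rho(H)-k}{k-1}$ where $H$ has $h_{ii}=1+s_i$, $h_{ij}=0$ if $c_{ij}=?$, $h_{ij}=c_{ij}$ otherwise, and $\rho$ is the spectral radius. *)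

theory Defs
  imports "Jordan_Normal_Form.Spectral_Radius"
begin

text \<open>Incomplete pairwise comparison matrices of size n, indices 0..n-1.
  None encodes a missing entry.\<close>
definition incomplete_pcm :: "nat \<Rightarrow> (nat \<Rightarrow> nat \<Rightarrow> real option) \<Rightarrow> bool" where
  "incomplete_pcm n C \<longleftrightarrow>
     (\<forall>i<n. C i i = Some 1) \<and>
     (\<forall>i<n. \<forall>j<n. (C i j = None \<longleftrightarrow> C j i = None) \<and>
        (\<forall>x. C i j = Some x \<longrightarrow> x > 0 \<and> C j i = Some (1 / x)))"

definition miss :: "(nat \<Rightarrow> nat \<Rightarrow> real option) \<Rightarrow> nat \<Rightarrow> nat \<Rightarrow> nat" where
  "miss C k i = card {j. j < k \<and> C i j = None}"

definition s_max :: "(nat \<Rightarrow> nat \<Rightarrow> real option) \<Rightarrow> nat \<Rightarrow> nat" where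
  "s_max C k = Max (miss C k ` {..<k})"

definition s_min :: "(nat \<Rightarrow> nat \<Rightarrow> real option) \<Rightarrow> nat \<Rightarrow> nat" where
  "s_min C k = Min (miss C k ` {..<k})"

definition dval :: "(nat \<Rightarrow> nat \<Rightarrow> real option) \<Rightarrow> nat \<Rightarrow> nat \<Rightarrow> real" where
  "dval C i j = (case C i j of None \<Rightarrow> 0 | Some x \<Rightarrow> x)"

definition hre_A :: "nat \<Rightarrow> (nat \<Rightarrow> nat \<Rightarrow> real option) \<Rightarrow> nat \<Rightarrow> real mat" where
  "hre_A n C k = mat k k (\<lambda>(i, j). if i = j then 1
      else - dval C i j / (real n - real (miss C k i) - 1))"

definition harker_H :: "(nat \<Rightarrow> nat \<Rightarrow> real option) \<Rightarrow> nat \<Rightarrow> real mat" where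
  "harker_H C k = mat k k (\<lambda>(i, j). if i = j then 1 + real (miss C k i) else dval C i j)"

definition harker_CI :: "(nat \<Rightarrow> nat \<Rightarrow> real option) \<Rightarrow> nat \<Rightarrow> real" where
  "harker_CI C k = (spectral_radius (map_mat complex_of_real (harker_H C k)) - real k) / (real k - 1)"

end

theory Submission
  imports Defs
begin

lemma det_nz_invertible:
  assumes A: "(A :: real mat) \<in> carrier_mat m m" and d: "det A \<noteq> 0"
  shows "invertible_mat A"
proof -
  from det_non_zero_imp_unit[OF A d, of "()"]
  obtain B where B: "B \<in> carrier_mat m m" "B * A = 1\<^sub>m m" "A * B = 1\<^sub>m m"
    unfolding Units_def ring_mat_def by auto
  show ?thesis unfolding invertible_mat_def inverts_mat_def square_mat.simps
    using A B by (intro conjI exI[of _ B]) auto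
qed

lemma miss_le:
  assumes "incomplete_pcm n C" "i < k" "k < n"
  shows "miss C k i \<le> k - 1"
proof -
  have "C i i = Some 1" using assms unfolding incomplete_pcm_def by auto
  hence "{j. j < k \<and> C i j = None} \<subseteq> {..<k} - {i}" by auto
  hence "card {j. j < k \<and> C i j = None} \<le> card ({..<k} - {i})"
    by (intro card_mono) auto
  thus ?thesis using assms(2) unfolding miss_def by simp
qed

theorem mainTheorem7:
  fixes n k :: nat and C :: "nat \<Rightarrow> nat \<Rightarrow> real option"
  assumes "incomplete_pcm n C"
    and "1 \<le> k" and "k < n"
    and "k = 1 \<or> (s_max C k = s_min C k \<and> harker_CI C k < (real n - real k) / (real k - 1))"
  shows "invertible_mat (hre_A n C k)"
proof (cases "k = 1")
  case True
  have "hre_A n C k = 1\<^sub>m 1" unfolding hre_A_def True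
    by (rule eq_matI) auto
  moreover have "det (1\<^sub>m 1 :: real mat) \<noteq> 0" by simp
  ultimately show ?thesis using det_nz_invertible[of "1\<^sub>m 1" 1] by simp
next
  case False
  hence k2: "k \<ge> 2" using assms(2) by simp
  from False assms(4) have sm: "s_max C k = s_min C k"
    and ci: "harker_CI C k < (real n - real k) / (real k - 1)" by auto
  define s where "s = s_max C k"
  have fin: "finite (miss C k ` {..<k})" and ne: "miss C k ` {..<k} \<noteq> {}" using k2 by (auto simp: lessThan_empty_iff)
  have ms: "miss C k i = s" if "i < k" for i
  proof -
    have "miss C k i \<le> s" unfolding s_def s_max_def using that fin by auto
    moreover have "miss C k i \<ge> s" unfolding s_def sm s_min_def using that fin by auto
    ultimately show ?thesis by simp
  qed
  have sle: "s \<le> k - 1" using miss_le[OF assms(1) _ assms(3), of 0] ms[of 0] k2 by auto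
  define m where "m = real n - real s - 1"
  have mpos: "m > 0" unfolding m_def using sle assms(3) k2 by linarith
  define A where "A = hre_A n C k"
  define H where "H = harker_H C k"
  have A: "A \<in> carrier_mat k k" and H: "H \<in> carrier_mat k k"
    unfolding A_def H_def hre_A_def harker_H_def by auto
  have dii: "dval C i i = 1" if "i < k" for i
    using assms(1) that assms(3) unfolding incomplete_pcm_def dval_def by auto
  have HA: "H = real n \<cdot>\<^sub>m 1\<^sub>m k - m \<cdot>\<^sub>m A"
  proof (rule eq_matI)
    fix i j assume ij: "i < dim_row (real n \<cdot>\<^sub>m 1\<^sub>m k - m \<cdot>\<^sub>m A)" "j < dim_col (real n \<cdot>\<^sub>m 1\<^sub>m k - m \<cdot>\<^sub>m A)"
    hence i: "i < k" and j: "j < k" using A by auto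
    show "H $$ (i, j) = (real n \<cdot>\<^sub>m 1\<^sub>m k - m \<cdot>\<^sub>m A) $$ (i, j)"
      using i j A mpos unfolding H_def A_def hre_A_def harker_H_def
      by (cases "i = j") (auto simp: ms dii m_def[symmetric], simp add: m_def)
  qed (use A H in auto)
  have rho: "spectral_radius (map_mat complex_of_real H) < real n"
  proof -
    have "real k - 1 > 0" using k2 by simp
    moreover have "(spectral_radius (map_mat complex_of_real H) - real k) / (real k - 1)
       < (real n - real k) / (real k - 1)"
      using ci unfolding harker_CI_def H_def by simp
    ultimately have "spectral_radius (map_mat complex_of_real H) - real k < real n - real k"
      using divide_less_cancel by blast
    thus ?thesis by simp
  qed
  have "det A \<noteq> 0"
  proof
    assume "det A = 0"
    then obtain v where v: "v \<in> carrier_vec k" "v \<noteq> 0\<^sub>v k" "A *\<^sub>v v = 0\<^sub>v k"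
      using det_0_iff_vec_prod_zero_field[OF A] by auto
    have sm1: "(c \<cdot>\<^sub>m B) *\<^sub>v v = c \<cdot>\<^sub>v (B *\<^sub>v v)" if "B \<in> carrier_mat k k" for c :: real and B
      using that v(1) by (intro eq_vecI) (auto simp: scalar_prod_def sum_distrib_left ac_simps)
    have Hv: "H *\<^sub>v v = real n \<cdot>\<^sub>v v"
      unfolding HA using v A
      by (simp add: minus_mult_distrib_mat_vec[of _ k k] sm1, intro eq_vecI, auto)
    define w where "w = map_vec complex_of_real v"
    have "map_mat complex_of_real H *\<^sub>v w = map_vec complex_of_real (H *\<^sub>v v)"
      unfolding w_def by (rule sym, rule of_real_hom.mult_mat_vec_hom[OF H v(1)])
    also have "\<dots> = complex_of_real (real n) \<cdot>\<^sub>v w" unfolding Hv w_def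
      by (rule eq_vecI) auto
    finally have ev: "map_mat complex_of_real H *\<^sub>v w = complex_of_real (real n) \<cdot>\<^sub>v w" .
    have "w \<noteq> 0\<^sub>v k"
    proof
      assume "w = 0\<^sub>v k"
      hence "v = 0\<^sub>v k" unfolding w_def using v(1)
        by (intro eq_vecI) (auto simp: vec_eq_iff dest!: arg_cong[of _ _ "\<lambda>x. x $ _"])
      with v show False by simp
    qed
    hence "eigenvalue (map_mat complex_of_real H) (complex_of_real (real n))"
      unfolding eigenvalue_def eigenvector_def using ev v(1) H unfolding w_def
      by (intro exI[of _ w]) (auto simp: w_def)
    hence "norm (complex_of_real (real n)) \<in> norm ` spectrum (map_mat complex_of_real H)"
      unfolding spectrum_def by blast
    hence "norm (complex_of_real (real n)) \<le> spectral_radius (map_mat complex_of_real H)"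
      using spectral_radius_mem_max(2)[of "map_mat complex_of_real H" k] H k2 by auto
    with rho show False by simp
  qed
  thus ?thesis using det_nz_invertible[OF A] unfolding A_def by simp
qed

end
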